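(* Let $n\ge2$ and consider Gram blocks of a fully symmetric solution: $P_1,\dots,P_n\in\mathbb{R}^{d\times p}$ with $P_i^TP_i=G^A$ for all $i$ and $P_i^TP_j=G^C$ for all $i\ne j$, and let $G^T=\frac1n(G^A+(n-1)G^C)$, $G^D=G^A-G^T$. Let $\xi_{g^*},\xi_{x^*}\in\mathbb{R}^p$ and $g_i^*=P_i\xi_{g^*}$, $x_i^*=P_i\xi_{x^*}$ ($g_i^*$ representing $\nabla f_i(x_i^* )$). Then the optimality constraints $\frac1n\sum_{i=1}^ng_i^*=0$ and $x_i^*=x_j^*$ for all $i,j$ are equivalent to $\xi_{g^*}^TG^T\xi_{g^*}=0$ and $\xi_{x^*}^TG^D\xi_{x^*}=0$.
   Context: This arises in performance estimation problems for distributed optimization of $\frac1n\sum_if_i(x)$ where each agent holds a copy $x_i^*$ of the minimizer $x^*$ and the gradient of its local function there; the system-level stationarity condition is $\frac1n\sum_i\nabla f_i(x^* )=0$. *)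

theory Defs
  imports "HOL-Analysis.Analysis"
begin

end

theory Submission
  imports Defs
begin

lemma inner_mv: "((A::real^'p^'d) *v x) \<bullet> ((B::real^'p^'d) *v y) = x \<bullet> ((transpose A ** B) *v y)"
proof -
  have "(A *v x) \<bullet> (B *v y) = (x v* transpose A) \<bullet> (B *v y)" by simp
  also have "\<dots> = x \<bullet> (transpose A *v (B *v y))" by (rule dot_lmul_matrix)
  also have "\<dots> = x \<bullet> ((transpose A ** B) *v y)" by (simp only: matrix_vector_mul_assoc)
  finally show ?thesis .
qed

lemma sum_ifeq: "i < (n::nat) \<Longrightarrow> (\<Sum>j<n. if i = j then a else (c::real)) = a + (real n - 1) * c"
proof -
  assume i: "i < n"
  have "(\<Sum>j<n. if i = j then a else c) = (\<Sum>j<n. c + (if i = j then a - c else 0))"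
    by (rule sum.cong) auto
  also have "\<dots> = real n * c + (a - c)" using i by (simp add: sum.distrib)
  finally show ?thesis by (simp add: algebra_simps)
qed

theorem proposition10:
  fixes n :: nat
    and P :: "nat \<Rightarrow> real ^ 'p ^ 'd"
    and GA GC GT GD :: "real ^ 'p ^ 'p"
    and xi_g xi_x :: "real ^ 'p"
    and g x :: "nat \<Rightarrow> real ^ 'd"
  assumes n2: "n \<ge> 2"
    and hA: "\<And>i. i < n \<Longrightarrow> transpose (P i) ** P i = GA"
    and hC: "\<And>i j. i < n \<Longrightarrow> j < n \<Longrightarrow> i \<noteq> j \<Longrightarrow> transpose (P i) ** P j = GC"
    and hT: "GT = (1 / real n) *\<^sub>R (GA + (real n - 1) *\<^sub>R GC)"
    and hD: "GD = GA - GT"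
    and hg: "\<And>i. g i = P i *v xi_g"
    and hx: "\<And>i. x i = P i *v xi_x"
  shows "(((1 / real n) *\<^sub>R (\<Sum>i<n. g i) = 0) \<and> (\<forall>i<n. \<forall>j<n. x i = x j))
     \<longleftrightarrow> (xi_g \<bullet> (GT *v xi_g) = 0 \<and> xi_x \<bullet> (GD *v xi_x) = 0)"
proof -
  have npos: "real n > 0" using n2 by simp
  have key: "(P i *v v) \<bullet> (P j *v v) = (if i = j then v \<bullet> (GA *v v) else v \<bullet> (GC *v v))"
    if "i < n" "j < n" for i j v
    using that hA hC by (simp add: inner_mv)
  have dsum: "(\<Sum>i<n. \<Sum>j<n. (P i *v v) \<bullet> (P j *v v)) = real n * (v \<bullet> (GA *v v) + (real n - 1) * (v \<bullet> (GC *v v)))" for v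
  proof -
    have "(\<Sum>i<n. \<Sum>j<n. (P i *v v) \<bullet> (P j *v v)) = (\<Sum>i<n. v \<bullet> (GA *v v) + (real n - 1) * (v \<bullet> (GC *v v)))"
      by (rule sum.cong) (simp_all add: key sum_ifeq)
    then show ?thesis by simp
  qed
  have GTv: "v \<bullet> (GT *v v) = (1 / real n) * (v \<bullet> (GA *v v) + (real n - 1) * (v \<bullet> (GC *v v)))" for v
    by (simp add: hT scaleR_matrix_vector_assoc[symmetric] matrix_vector_mult_add_rdistrib inner_add_right)
  have GDv: "v \<bullet> (GD *v v) = v \<bullet> (GA *v v) - v \<bullet> (GT *v v)" for v
    by (simp add: hD matrix_vector_mult_diff_rdistrib inner_diff_right)
  have n1: "norm (\<Sum>i<n. P i *v v) ^ 2 = real n ^ 2 * (v \<bullet> (GT *v v))" for v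
  proof -
    have "norm (\<Sum>i<n. P i *v v) ^ 2 = (\<Sum>i<n. P i *v v) \<bullet> (\<Sum>j<n. P j *v v)"
      by (simp add: power2_norm_eq_inner)
    also have "\<dots> = (\<Sum>i<n. \<Sum>j<n. (P i *v v) \<bullet> (P j *v v))"
      by (simp add: inner_sum_left inner_sum_right) (rule sum.swap)
    also have "\<dots> = real n ^ 2 * (v \<bullet> (GT *v v))" using npos
      by (simp add: dsum GTv power2_eq_square)
    finally show ?thesis .
  qed
  have part1: "((1 / real n) *\<^sub>R (\<Sum>i<n. g i) = 0) \<longleftrightarrow> xi_g \<bullet> (GT *v xi_g) = 0"
  proof -
    have "((1 / real n) *\<^sub>R (\<Sum>i<n. g i) = 0) \<longleftrightarrow> (\<Sum>i<n. P i *v xi_g) = 0"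
      using npos by (simp add: hg)
    also have "\<dots> \<longleftrightarrow> norm (\<Sum>i<n. P i *v xi_g) ^ 2 = 0" by simp
    also have "\<dots> \<longleftrightarrow> xi_g \<bullet> (GT *v xi_g) = 0" using npos by (simp add: n1)
    finally show ?thesis .
  qed
  have n2s: "(\<Sum>i<n. \<Sum>j<n. norm (P i *v v - P j *v v) ^ 2) = 2 * real n ^ 2 * (v \<bullet> (GD *v v))" for v
  proof -
    have e: "norm (P i *v v - P j *v v) ^ 2 = (P i *v v) \<bullet> (P i *v v) + (P j *v v) \<bullet> (P j *v v) - 2 * ((P i *v v) \<bullet> (P j *v v))" for i j
      by (simp add: power2_norm_eq_inner inner_diff_left inner_diff_right inner_commute)
    have "(\<Sum>i<n. \<Sum>j<n. norm (P i *v v - P j *v v) ^ 2)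
       = (\<Sum>i<n. \<Sum>j<n. v \<bullet> (GA *v v) + v \<bullet> (GA *v v) - 2 * ((P i *v v) \<bullet> (P j *v v)))"
      by (rule sum.cong, simp, rule sum.cong, simp) (simp add: e key)
    also have "\<dots> = (\<Sum>i<n. \<Sum>j<n. 2 * (v \<bullet> (GA *v v))) - 2 * (\<Sum>i<n. \<Sum>j<n. (P i *v v) \<bullet> (P j *v v))"
      by (simp add: sum_subtractf sum_distrib_left)
    also have "\<dots> = 2 * real n ^ 2 * (v \<bullet> (GD *v v))"
      using npos by (simp add: dsum GDv GTv power2_eq_square field_simps)
    finally show ?thesis .
  qed
  have part2: "(\<forall>i<n. \<forall>j<n. x i = x j) \<longleftrightarrow> xi_x \<bullet> (GD *v xi_x) = 0"
  proof -
    have "(\<forall>i<n. \<forall>j<n. x i = x j) \<longleftrightarrow> (\<forall>i\<in>{..<n}. \<forall>j\<in>{..<n}. norm (P i *v xi_x - P j *v xi_x) ^ 2 = 0)"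
      using hx by auto
    also have "\<dots> \<longleftrightarrow> (\<forall>i\<in>{..<n}. (\<Sum>j<n. norm (P i *v xi_x - P j *v xi_x) ^ 2) = 0)"
      by (simp add: sum_nonneg_eq_0_iff)
    also have "\<dots> \<longleftrightarrow> (\<Sum>i<n. \<Sum>j<n. norm (P i *v xi_x - P j *v xi_x) ^ 2) = 0"
      by (simp add: sum_nonneg_eq_0_iff sum_nonneg)
    also have "\<dots> \<longleftrightarrow> xi_x \<bullet> (GD *v xi_x) = 0" using npos by (simp add: n2s)
    finally show ?thesis .
  qed
  show ?thesis using part1 part2 by blast
qed

end
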